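(* Let $G$ be a finite group, let $H$ be a normal subgroup of $G$, and let $M$ be a subgroup with $H\leq M\leq G$. Let $C\subseteq G\setminus H$ be a union of some cosets of $H$ in $G$, and let $S_M,T_M$ be subsets of $M\setminus\{1\}$ such that $S_M^\alpha=T_M$ for some $\alpha\in\mathrm{Aut}(M)$ which fixes (setwise) every coset of $H$ in $M$. Put $S=C\cup S_M$ and $T=C\cup T_M$. Then $\mathrm{Cay}(G,S)\cong\mathrm{Cay}(G,T)$.
   Context: For a group $G$ and a subset $S\subseteq G$ with $1\notin S$, the Cayley digraph $\mathrm{Cay}(G,S)$ has vertex set $G$ and arc set $\{(g,sg)\mid g\in G,\ s\in S\}$. Isomorphism means digraph isomorphism. *)

theory Defs
  imports "HOL-Algebra.Algebra"
begin

definition cay_arcs :: "('a, 'b) monoid_scheme \<Rightarrow> 'a set \<Rightarrow> ('a \<times> 'a) set" where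
  "cay_arcs G S = {(g, s \<otimes>\<^bsub>G\<^esub> g) | g s. g \<in> carrier G \<and> s \<in> S}"

definition digraph_iso :: "'a set \<Rightarrow> ('a \<times> 'a) set \<Rightarrow> 'b set \<Rightarrow> ('b \<times> 'b) set \<Rightarrow> bool" where
  "digraph_iso V1 A1 V2 A2 \<longleftrightarrow>
     (\<exists>f. bij_betw f V1 V2 \<and>
          (\<forall>x\<in>V1. \<forall>y\<in>V1. (x, y) \<in> A1 \<longleftrightarrow> (f x, f y) \<in> A2))"

definition cay_iso :: "('a, 'b) monoid_scheme \<Rightarrow> 'a set \<Rightarrow> 'a set \<Rightarrow> bool" where
  "cay_iso G S T = digraph_iso (carrier G) (cay_arcs G S) (carrier G) (cay_arcs G T)"

end

theory Submission
  imports Defs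
begin

lemma (in group) cay_arcs_iff:
  assumes "S \<subseteq> carrier G" "x \<in> carrier G" "y \<in> carrier G"
  shows "(x, y) \<in> cay_arcs G S \<longleftrightarrow> y \<otimes> inv x \<in> S"
proof
  assume "(x, y) \<in> cay_arcs G S"
  then obtain s where "s \<in> S" "y = s \<otimes> x" unfolding cay_arcs_def by auto
  then show "y \<otimes> inv x \<in> S" using assms by (simp add: m_assoc subsetD)
next
  assume a: "y \<otimes> inv x \<in> S"
  have "y = (y \<otimes> inv x) \<otimes> x" using assms by (simp add: m_assoc)
  then show "(x, y) \<in> cay_arcs G S" unfolding cay_arcs_def using a assms(2) by blast
qed

lemma (in group) canc1 [simp]:
  "x \<in> carrier G \<Longrightarrow> y \<in> carrier G \<Longrightarrow> inv x \<otimes> (x \<otimes> y) = y"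
  by (simp add: m_assoc [symmetric])

lemma (in group) canc2 [simp]:
  "x \<in> carrier G \<Longrightarrow> y \<in> carrier G \<Longrightarrow> x \<otimes> (inv x \<otimes> y) = y"
  by (simp add: m_assoc [symmetric])

lemma (in group) alg1:
  assumes "a \<in> carrier G" "b \<in> carrier G" "c \<in> carrier G" "d \<in> carrier G"
  shows "b \<otimes> inv d = inv (a \<otimes> inv b) \<otimes> (a \<otimes> inv c) \<otimes> (c \<otimes> inv d)"
  using assms by (simp add: m_assoc inv_mult_group)

lemma (in group) alg2:
  assumes "a \<in> carrier G" "t \<in> carrier G" "b \<in> carrier G"
  shows "a \<otimes> t \<otimes> inv (b \<otimes> t) = a \<otimes> inv b"
  using assms by (simp add: m_assoc inv_mult_group)

lemma (in group) alg3:
  assumes "y \<in> carrier G" "x \<in> carrier G" "t \<in> carrier G"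
  shows "(y \<otimes> inv t) \<otimes> inv (x \<otimes> inv t) = y \<otimes> inv x"
  using assms by (simp add: m_assoc inv_mult_group)

lemma (in group) alg4:
  assumes "fy \<in> carrier G" "fx \<in> carrier G" "y \<in> carrier G" "x \<in> carrier G"
  shows "fy \<otimes> inv fx \<otimes> inv (y \<otimes> inv x) = (fy \<otimes> inv y) \<otimes> ((y \<otimes> inv x) \<otimes> inv (fx \<otimes> inv x) \<otimes> inv (y \<otimes> inv x))"
  using assms by (simp add: m_assoc inv_mult_group)

lemma (in group) main3p1:
  fixes H M C S_M T_M :: "'a set"
    and \<alpha> :: "'a \<Rightarrow> 'a"
  assumes "group G" and "finite (carrier G)"
    and "H \<lhd> G"
    and "subgroup M G" and "H \<subseteq> M"
    and "C \<subseteq> carrier G - H"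
    and "\<exists>K. K \<subseteq> rcosets\<^bsub>G\<^esub> H \<and> C = \<Union> K"
    and "S_M \<subseteq> M - {\<one>\<^bsub>G\<^esub>}" and "T_M \<subseteq> M - {\<one>\<^bsub>G\<^esub>}"
    and "\<alpha> \<in> iso (G\<lparr>carrier := M\<rparr>) (G\<lparr>carrier := M\<rparr>)"
    and "\<forall>x\<in>M. \<alpha> ` (H #>\<^bsub>G\<^esub> x) = H #>\<^bsub>G\<^esub> x"
    and "\<alpha> ` S_M = T_M"
  shows "cay_iso G (C \<union> S_M) (C \<union> T_M)"
proof -
  have sM: "subgroup M G" by fact
  have sH: "subgroup H G" using assms(3) normal_imp_subgroup by blast
  interpret nH: normal H G by fact
  have Mc: "M \<subseteq> carrier G" using sM subgroup.subset by blast
  have ahom: "\<And>x. x \<in> M \<Longrightarrow> \<alpha> x \<in> M"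
    and amul: "\<And>x y. x \<in> M \<Longrightarrow> y \<in> M \<Longrightarrow> \<alpha> (x \<otimes> y) = \<alpha> x \<otimes> \<alpha> y"
    and ainj: "inj_on \<alpha> M"
    using assms(10) unfolding iso_def hom_def bij_betw_def by auto
  have aone: "\<alpha> \<one> = \<one>"
  proof -
    have o: "\<one> \<in> M" using sM subgroup.one_closed by blast
    have "\<alpha> \<one> \<otimes> \<alpha> \<one> = \<alpha> \<one> \<otimes> \<one>" using amul[OF o o] ahom[OF o] Mc by auto
    then show ?thesis using ahom[OF o] Mc by (meson l_cancel one_closed subsetD)
  qed
  have ainv: "\<And>a b. a \<in> M \<Longrightarrow> b \<in> M \<Longrightarrow> \<alpha> (a \<otimes> inv b) = \<alpha> a \<otimes> inv (\<alpha> b)"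
  proof -
    fix a b assume a: "a \<in> M" and b: "b \<in> M"
    have ib: "inv b \<in> M" by (rule subgroup.m_inv_closed[OF sM b])
    have ab: "a \<otimes> inv b \<in> M" by (rule subgroup.m_closed[OF sM a ib])
    have ac: "a \<in> carrier G" "b \<in> carrier G" using a b Mc by auto
    have "a \<otimes> inv b \<otimes> b = a" using ac by (simp add: m_assoc)
    then have e: "\<alpha> (a \<otimes> inv b) \<otimes> \<alpha> b = \<alpha> a" using amul[OF ab b] by simp
    have c: "\<alpha> (a \<otimes> inv b) \<in> carrier G" "\<alpha> a \<in> carrier G" "\<alpha> b \<in> carrier G"
      using ahom[OF ab] ahom[OF b] ahom[OF a] Mc by auto
    show "\<alpha> (a \<otimes> inv b) = \<alpha> a \<otimes> inv (\<alpha> b)"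
      using inv_solve_right[OF c] e by simp
  qed
  have aH: "\<And>m. m \<in> M \<Longrightarrow> \<alpha> m \<otimes> inv m \<in> H"
  proof -
    fix m assume m: "m \<in> M"
    have mc: "m \<in> carrier G" using m Mc by blast
    have "m \<in> H #> m" using rcos_self[OF mc sH] .
    then have "\<alpha> m \<in> H #> m" using assms(11) m by blast
    then show "\<alpha> m \<otimes> inv m \<in> H" using subgroup.rcos_module_imp[OF sH is_group mc] by blast
  qed
  obtain K where K: "K \<subseteq> rcosets H" "C = \<Union> K" using assms(7) by blast
  have Cfact: "\<And>z w. z \<in> carrier G \<Longrightarrow> w \<in> carrier G \<Longrightarrow> w \<otimes> inv z \<in> H \<Longrightarrow> z \<in> C \<Longrightarrow> w \<in> C"
  proof -
    fix z w assume z: "z \<in> carrier G" and w: "w \<in> carrier G" and h: "w \<otimes> inv z \<in> H" and zC: "z \<in> C"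
    then obtain XX where X: "XX \<in> K" "z \<in> XX" using K by blast
    then obtain a where a: "a \<in> carrier G" "XX = H #> a" using K unfolding RCOSETS_def by blast
    have "H #> a = H #> z" using repr_independence[OF _ a(1) sH] X a by blast
    moreover have "w \<in> H #> z" using subgroup.rcos_module_rev[OF sH is_group z w h] .
    ultimately show "w \<in> C" using X a K by blast
  qed
  have Ceq: "\<And>z w. z \<in> carrier G \<Longrightarrow> w \<in> carrier G \<Longrightarrow> w \<otimes> inv z \<in> H \<Longrightarrow> z \<in> C \<longleftrightarrow> w \<in> C"
  proof -
    fix z w assume z: "z \<in> carrier G" and w: "w \<in> carrier G" and h: "w \<otimes> inv z \<in> H"
    have "inv (w \<otimes> inv z) = z \<otimes> inv w" using z w by (simp add: inv_mult_group)
    then have "z \<otimes> inv w \<in> H" using h sH subgroup.m_inv_closed by metis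
    then show "z \<in> C \<longleftrightarrow> w \<in> C" using Cfact z w h by blast
  qed
  define r where "r g = (SOME t. t \<in> M #> g)" for g
  have r1: "\<And>g. g \<in> carrier G \<Longrightarrow> r g \<in> M #> g"
    unfolding r_def by (rule someI, rule rcos_self[OF _ sM])
  have rc: "\<And>g. g \<in> carrier G \<Longrightarrow> r g \<in> carrier G"
    using r1 subgroup.elemrcos_carrier[OF sM is_group] by blast
  have rM: "\<And>g. g \<in> carrier G \<Longrightarrow> r g \<otimes> inv g \<in> M"
    using r1 subgroup.rcos_module_imp[OF sM is_group] by blast
  have rconst: "\<And>x y. x \<in> carrier G \<Longrightarrow> y \<in> carrier G \<Longrightarrow> y \<otimes> inv x \<in> M \<Longrightarrow> r x = r y"
  proof -
    fix x y assume x: "x \<in> carrier G" and y: "y \<in> carrier G" and h: "y \<otimes> inv x \<in> M"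
    have "y \<in> M #> x" using subgroup.rcos_module_rev[OF sM is_group x y h] .
    then have "M #> x = M #> y" using repr_independence[OF _ x sM] by blast
    then show "r x = r y" unfolding r_def by simp
  qed
  define mm where "mm g = g \<otimes> inv (r g)" for g
  have mmM: "\<And>g. g \<in> carrier G \<Longrightarrow> mm g \<in> M"
  proof -
    fix g assume g: "g \<in> carrier G"
    have "inv (r g \<otimes> inv g) = mm g" unfolding mm_def using g rc by (simp add: inv_mult_group)
    then show "mm g \<in> M" using rM[OF g] sM subgroup.m_inv_closed by metis
  qed
  define f where "f g = \<alpha> (mm g) \<otimes> r g" for g
  have fc: "\<And>g. g \<in> carrier G \<Longrightarrow> f g \<in> carrier G"
    unfolding f_def using mmM ahom rc Mc by blast
  have F2: "\<And>g. g \<in> carrier G \<Longrightarrow> f g \<otimes> inv g \<in> H"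
  proof -
    fix g assume g: "g \<in> carrier G"
    have c: "\<alpha> (mm g) \<in> carrier G" "r g \<in> carrier G" "mm g \<in> carrier G"
      using g rc ahom mmM Mc by auto
    have gg: "mm g \<otimes> r g = g" unfolding mm_def using g rc by (simp add: m_assoc)
    have "f g \<otimes> inv g = \<alpha> (mm g) \<otimes> r g \<otimes> inv (mm g \<otimes> r g)" unfolding f_def gg ..
    also have "\<dots> = \<alpha> (mm g) \<otimes> inv (mm g)" using alg2[OF c] .
    finally have "f g \<otimes> inv g = \<alpha> (mm g) \<otimes> inv (mm g)" .
    then show "f g \<otimes> inv g \<in> H" using aH mmM g by simp
  qed
  have F3: "\<And>x y. x \<in> carrier G \<Longrightarrow> y \<in> carrier G \<Longrightarrow> y \<otimes> inv x \<in> M \<Longrightarrow>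
      f y \<otimes> inv (f x) = \<alpha> (y \<otimes> inv x)"
  proof -
    fix x y assume x: "x \<in> carrier G" and y: "y \<in> carrier G" and h: "y \<otimes> inv x \<in> M"
    have rr: "r x = r y" using rconst x y h by blast
    have "f y \<otimes> inv (f x) = \<alpha> (mm y) \<otimes> inv (\<alpha> (mm x))"
    proof -
      have c: "\<alpha> (mm y) \<in> carrier G" "r y \<in> carrier G" "\<alpha> (mm x) \<in> carrier G"
        using x y rc ahom mmM Mc by auto
      show ?thesis unfolding f_def rr using alg2[OF c] .
    qed
    also have "\<dots> = \<alpha> (mm y \<otimes> inv (mm x))" using ainv mmM x y by simp
    also have "mm y \<otimes> inv (mm x) = y \<otimes> inv x" unfolding mm_def rr using alg3[OF y x rc[OF y]] .
    finally show "f y \<otimes> inv (f x) = \<alpha> (y \<otimes> inv x)" .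
  qed
  have F4: "\<And>x y. x \<in> carrier G \<Longrightarrow> y \<in> carrier G \<Longrightarrow> f y \<otimes> inv (f x) \<in> M \<Longrightarrow> y \<otimes> inv x \<in> M"
  proof -
    fix x y assume x: "x \<in> carrier G" and y: "y \<in> carrier G" and h: "f y \<otimes> inv (f x) \<in> M"
    have e: "y \<otimes> inv x = inv (f y \<otimes> inv y) \<otimes> (f y \<otimes> inv (f x)) \<otimes> (f x \<otimes> inv x)"
      using alg1 fc x y by blast
    have "f y \<otimes> inv y \<in> M" "f x \<otimes> inv x \<in> M" using F2 x y assms(5) by auto
    then show "y \<otimes> inv x \<in> M" unfolding e using h sM
      by (meson subgroup.m_closed subgroup.m_inv_closed)
  qed
  have F5: "\<And>x y. x \<in> carrier G \<Longrightarrow> y \<in> carrier G \<Longrightarrow> (f y \<otimes> inv (f x)) \<otimes> inv (y \<otimes> inv x) \<in> H"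
  proof -
    fix x y assume x: "x \<in> carrier G" and y: "y \<in> carrier G"
    have "(y \<otimes> inv x) \<otimes> inv (f x \<otimes> inv x) \<otimes> inv (y \<otimes> inv x) \<in> H"
      using nH.inv_op_closed2[of "y \<otimes> inv x" "inv (f x \<otimes> inv x)"] F2[OF x] x y sH subgroup.m_inv_closed by blast
    moreover have "f y \<otimes> inv y \<in> H" using F2 y by blast
    ultimately show "(f y \<otimes> inv (f x)) \<otimes> inv (y \<otimes> inv x) \<in> H"
      using alg4[OF fc[OF y] fc[OF x] y x] sH subgroup.m_closed by fastforce
  qed
  have finj: "inj_on f (carrier G)"
  proof (rule inj_onI)
    fix x y assume x: "x \<in> carrier G" and y: "y \<in> carrier G" and e: "f x = f y"
    have "f y \<otimes> inv (f x) = \<one>" using e fc y by simp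
    then have d: "y \<otimes> inv x \<in> M" using F4 x y sM subgroup.one_closed by metis
    then have "\<alpha> (y \<otimes> inv x) = \<alpha> \<one>" using F3 x y aone \<open>f y \<otimes> inv (f x) = \<one>\<close> by metis
    then have "y \<otimes> inv x = \<one>" using ainj d sM subgroup.one_closed inj_onD by metis
    then show "x = y" using x y by (metis inv_equality inv_inv inv_closed r_inv)
  qed
  have fbij: "bij_betw f (carrier G) (carrier G)"
    unfolding bij_betw_def using finj fc endo_inj_surj[OF assms(2) _ finj] by blast
  have SC: "C \<union> S_M \<subseteq> carrier G" "C \<union> T_M \<subseteq> carrier G" using assms(6,8,9) Mc by auto
  show ?thesis unfolding cay_iso_def digraph_iso_def
  proof (intro exI conjI ballI)
    show "bij_betw f (carrier G) (carrier G)" by (rule fbij)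
    fix x y assume x: "x \<in> carrier G" and y: "y \<in> carrier G"
    define d where "d = y \<otimes> inv x"
    define e where "e = f y \<otimes> inv (f x)"
    have dc: "d \<in> carrier G" "e \<in> carrier G" unfolding d_def e_def using x y fc by auto
    have CC: "d \<in> C \<longleftrightarrow> e \<in> C" using Ceq dc F5 x y unfolding d_def e_def by blast
    have SS: "d \<in> S_M \<longleftrightarrow> e \<in> T_M"
    proof (cases "d \<in> M")
      case True
      then have "e = \<alpha> d" unfolding d_def e_def using F3 x y by blast
      then show ?thesis using True ainj assms(12) by (metis inj_on_image_mem_iff assms(8) Diff_subset subset_trans)
    next
      case False
      then have "e \<notin> M" using F4 x y unfolding d_def e_def by blast
      then show ?thesis using False assms(8,9) by blast
    qed
    show "((x, y) \<in> cay_arcs G (C \<union> S_M)) = ((f x, f y) \<in> cay_arcs G (C \<union> T_M))"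
      using cay_arcs_iff[OF SC(1) x y] cay_arcs_iff[OF SC(2) fc[OF x] fc[OF y]] CC SS
      unfolding d_def e_def by blast
  qed
qed

theorem lemma3p1:
  fixes G :: "('a, 'b) monoid_scheme"
    and H M C S_M T_M :: "'a set"
    and \<alpha> :: "'a \<Rightarrow> 'a"
  assumes "group G" and "finite (carrier G)"
    and "H \<lhd> G"
    and "subgroup M G" and "H \<subseteq> M"
    and "C \<subseteq> carrier G - H"
    and "\<exists>K. K \<subseteq> rcosets\<^bsub>G\<^esub> H \<and> C = \<Union> K"
    and "S_M \<subseteq> M - {\<one>\<^bsub>G\<^esub>}" and "T_M \<subseteq> M - {\<one>\<^bsub>G\<^esub>}"
    and "\<alpha> \<in> iso (G\<lparr>carrier := M\<rparr>) (G\<lparr>carrier := M\<rparr>)"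
    and "\<forall>x\<in>M. \<alpha> ` (H #>\<^bsub>G\<^esub> x) = H #>\<^bsub>G\<^esub> x"
    and "\<alpha> ` S_M = T_M"
  shows "cay_iso G (C \<union> S_M) (C \<union> T_M)"
  using group.main3p1[OF assms(1) assms] .

end
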